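(* Let $\phi:[0,1]\to[0,1]$ be a nondecreasing continuous function such that $\phi(x)>x$ for all $x\in(0,1)$, and let $V_\phi$ be the operator on $L_2[0,1]$ given by $(V_\phi f)(x)=\int_0^{\phi(x)}f(t)\,dt$. Then its Fredholm determinant is $$D_{V_\phi}(\lambda)=1+\sum_{n=1}^\infty(-1)^n\lambda^n\int_0^1\int_{\phi(t_1)}^1\cdots\int_{\phi(t_{n-1})}^1 dt_n\cdots dt_1 .$$
   Context: $V_\phi$ is the integral operator $(V_\phi f)(x)=\int_0^1 k(x,t)f(t)\,dt$ with bounded kernel $k(x,t)=1$ if $t\le\phi(x)$ and $k(x,t)=0$ if $t>\phi(x)$. For an integral operator $K$ on $L_2[0,1]$ with bounded kernel $k(x,t)$, its Fredholm determinant is $D_K(\lambda)=\sum_{n=0}^\infty\frac{(-1)^n}{n!}A_n\lambda^n$, where $A_0=1$ and for $n\ge1$, $A_n=\int_0^1\cdots\int_0^1\det\big(k(t_i,t_j)\big)_{i,j=1}^n\,dt_1\cdots dt_n$. *)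

theory Defs
  imports "HOL-Probability.Probability" "Jordan_Normal_Form.Determinant"
begin

definition Vphi_kernel :: "(real \<Rightarrow> real) \<Rightarrow> real \<Rightarrow> real \<Rightarrow> real" where
  "Vphi_kernel \<phi> x t = (if t \<le> \<phi> x then 1 else 0)"

definition fred_A :: "(real \<Rightarrow> real \<Rightarrow> real) \<Rightarrow> nat \<Rightarrow> real" where
  "fred_A k n = (\<integral> t. det (mat n n (\<lambda>(i,j). k (t i) (t j)))
      \<partial>(PiM {..<n} (\<lambda>_. restrict_space lborel {0..1})))"

definition fred_term :: "(real \<Rightarrow> real \<Rightarrow> real) \<Rightarrow> complex \<Rightarrow> nat \<Rightarrow> complex" where
  "fred_term k z n = ((-1)^n / of_nat (fact n)) * of_real (fred_A k n) * z^n"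

definition fredholm_det :: "(real \<Rightarrow> real \<Rightarrow> real) \<Rightarrow> complex \<Rightarrow> complex" where
  "fredholm_det k z = (\<Sum>n. fred_term k z n)"

fun iter_inner :: "(real \<Rightarrow> real) \<Rightarrow> nat \<Rightarrow> real \<Rightarrow> real" where
  "iter_inner \<phi> 0 s = 1"
| "iter_inner \<phi> (Suc m) s = integral {\<phi> s..1} (iter_inner \<phi> m)"

definition iter_int :: "(real \<Rightarrow> real) \<Rightarrow> nat \<Rightarrow> real" where
  "iter_int \<phi> n = integral {0..1} (iter_inner \<phi> (n - 1))"

end

theory Submission
  imports Defs
begin

definition chainp :: "(real \<Rightarrow> real) \<Rightarrow> nat set \<Rightarrow> (nat \<Rightarrow> real) \<Rightarrow> bool" where
  "chainp \<phi> J t = (\<forall>i\<in>J. \<forall>k\<in>J. i \<noteq> k \<longrightarrow> t i \<noteq> t k \<and> (t i < t k \<longrightarrow> \<phi> (t i) < t k))"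

lemma det_chain1:
  assumes ge: "\<forall>x\<in>{0..1}. x \<le> \<phi> x" and t: "\<forall>i<n. t i \<in> {0..1}"
    and ch: "chainp \<phi> {..<n} t"
  shows "det (mat n n (\<lambda>(i,j). Vphi_kernel \<phi> (t i) (t j))) = 1"
proof -
  define A where "A = mat n n (\<lambda>(i,j). Vphi_kernel \<phi> (t i) (t j))"
  have Aij: "A $$ (i,j) = (if t j \<le> t i then 1 else 0)" if "i < n" "j < n" for i j
  proof -
    have "t j \<le> \<phi> (t i) \<longleftrightarrow> t j \<le> t i"
    proof
      assume "t j \<le> \<phi> (t i)"
      show "t j \<le> t i"
      proof (rule ccontr)
        assume "\<not> t j \<le> t i"
        hence "t i < t j" by simp
        moreover have "i \<noteq> j" using \<open>t i < t j\<close> by auto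
        ultimately have "\<phi> (t i) < t j" using ch that unfolding chainp_def by auto
        thus False using \<open>t j \<le> \<phi> (t i)\<close> by simp
      qed
    next
      assume "t j \<le> t i" thus "t j \<le> \<phi> (t i)" using ge t that by force
    qed
    thus ?thesis using that unfolding A_def Vphi_kernel_def by simp
  qed
  have zero: "(\<Prod>i = 0..<n. A $$ (i, p i)) = 0" if p: "p permutes {0..<n}" "p \<noteq> id" for p
  proof -
    have "\<exists>i<n. t i < t (p i)"
    proof (rule ccontr)
      assume "\<not> (\<exists>i<n. t i < t (p i))"
      hence le: "\<forall>i<n. t (p i) \<le> t i" by auto
      have "(\<Sum>i=0..<n. t (p i)) = (\<Sum>i=0..<n. t i)"
        using sum.permute[OF p(1), of t] by (simp add: comp_def)
      hence "(\<Sum>i=0..<n. t i - t (p i)) = 0" by (simp add: sum_subtractf)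
      hence "\<forall>i\<in>{0..<n}. t i - t (p i) = 0"
        by (subst sum_nonneg_eq_0_iff[symmetric]) (use le in auto)
      hence "\<forall>i<n. p i = i"
      proof (intro allI impI)
        fix i assume "\<forall>i\<in>{0..<n}. t i - t (p i) = 0" "i < n"
        hence "t i = t (p i)" by auto
        moreover have "p i < n" using permutes_in_image[OF p(1)] \<open>i<n\<close> by auto
        ultimately show "p i = i" using ch \<open>i<n\<close> unfolding chainp_def by (metis lessThan_iff)
      qed
      hence "p = id" using permutes_not_in[OF p(1)] by (auto simp: fun_eq_iff)
      thus False using p by simp
    qed
    then obtain i where i: "i < n" "t i < t (p i)" by auto
    have "p i < n" using permutes_in_image[OF p(1)] i by auto
    hence "A $$ (i, p i) = 0" using Aij i by auto
    thus ?thesis using i by (intro prod_zero) auto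
  qed
  have "det A = (\<Sum>p \<in> {p. p permutes {0..<n}}. signof p * (\<Prod>i = 0..<n. A $$ (i, p i)))"
    unfolding det_def A_def by simp
  also have "\<dots> = signof (id::nat\<Rightarrow>nat) * (\<Prod>i = 0..<n. A $$ (i, id i))"
  proof -
    have fin: "finite {p. p permutes {0..<(n::nat)}}" by (rule finite_permutations) simp
    have idin: "id \<in> {p. p permutes {0..<n}}" using permutes_id by auto
    show ?thesis
      apply (subst sum.remove[OF fin idin])
      apply (subst sum.neutral)
      using zero by auto
  qed
  also have "\<dots> = 1" using Aij by (simp add: sign_id)
  finally show ?thesis unfolding A_def .
qed

lemma det_chain0:
  assumes mono: "mono_on {0..1} \<phi>" and ge: "\<forall>x\<in>{0..1}. x \<le> \<phi> x" and t: "\<forall>i<n. t i \<in> {0..1}"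
    and nch: "\<not> chainp \<phi> {..<n} t"
  shows "det (mat n n (\<lambda>(i,j). Vphi_kernel \<phi> (t i) (t j))) = 0"
proof -
  define A where "A = mat n n (\<lambda>(i,j). Vphi_kernel \<phi> (t i) (t j))"
  have Ac: "A \<in> carrier_mat n n" unfolding A_def by simp
  define S where "S l = {c\<in>{..<n}. t c \<le> \<phi> (t l)}" for l
  have rowS: "row A l = row A l'" if "l < n" "l' < n" "S l = S l'" for l l'
  proof (rule eq_vecI)
    show "dim_vec (row A l) = dim_vec (row A l')" unfolding A_def by simp
    fix c assume "c < dim_vec (row A l')"
    hence c: "c < n" unfolding A_def by simp
    have "(t c \<le> \<phi> (t l)) = (t c \<le> \<phi> (t l'))" using that(3) c unfolding S_def by blast
    thus "row A l $ c = row A l' $ c" using c that unfolding A_def Vphi_kernel_def by simp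
  qed
  have "\<exists>l l'. l \<noteq> l' \<and> l < n \<and> l' < n \<and> S l = S l'"
  proof (cases "inj_on t {..<n}")
    case False
    then obtain l l' where "l \<noteq> l'" "l < n" "l' < n" "t l = t l'" unfolding inj_on_def by auto
    thus ?thesis unfolding S_def by (intro exI[of _ l] exI[of _ l']) auto
  next
    case inj: True
    then obtain i k where ik: "i < n" "k < n" "t i < t k" "\<not> \<phi> (t i) < t k"
      using nch unfolding chainp_def inj_on_def by auto
    define R where "R l = {c\<in>{..<n}. t c \<le> t l}" for l
    have finS: "finite (S l)" "finite (R l)" for l unfolding S_def R_def by auto
    have RS: "R l \<subseteq> S l" if "l < n" for l
      using ge t that unfolding R_def S_def by force
    have Snest: "S l \<subseteq> S l'" if "l < n" "l' < n" "t l \<le> t l'" for l l'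
    proof -
      have "\<phi> (t l) \<le> \<phi> (t l')" using mono t that by (auto intro: mono_onD)
      thus ?thesis unfolding S_def by auto
    qed
    have cardS: "card (S l) \<in> {1..n}" "card (R l) \<in> {1..n}" if "l < n" for l
    proof -
      have "l \<in> R l" using that unfolding R_def by auto
      hence "l \<in> S l" using RS that by auto
      moreover have "S l \<subseteq> {..<n}" "R l \<subseteq> {..<n}" unfolding S_def R_def by auto
      ultimately show "card (S l) \<in> {1..n}" "card (R l) \<in> {1..n}"
        using \<open>l \<in> R l\<close> finS card_mono[of "{..<n}" "S l"] card_mono[of "{..<n}" "R l"]
        by (auto simp: Suc_le_eq card_gt_0_iff)
    qed
    have injR: "inj_on (\<lambda>l. card (R l)) {..<n}"
    proof (rule inj_onI)
      fix l l' assume ll: "l \<in> {..<n}" "l' \<in> {..<n}" "card (R l) = card (R l')"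
      show "l = l'"
      proof (rule ccontr)
        assume "l \<noteq> l'"
        hence "t l \<noteq> t l'" using inj ll unfolding inj_on_def by auto
        have lt: "card (R a) < card (R b)" if "a < n" "b < n" "t a < t b" for a b
        proof (rule psubset_card_mono)
          show "finite (R b)" by (rule finS)
          have "b \<in> R b" "b \<notin> R a" using that unfolding R_def by auto
          moreover have "R a \<subseteq> R b" using that unfolding R_def by auto
          ultimately show "R a \<subset> R b" by blast
        qed
        show False using lt[of l l'] lt[of l' l] ll \<open>t l \<noteq> t l'\<close> by (cases "t l < t l'") auto
      qed
    qed
    show ?thesis
    proof (rule ccontr)
      assume "\<not> ?thesis"
      hence nS: "S l \<noteq> S l'" if "l \<noteq> l'" "l < n" "l' < n" for l l' using that by blast
      have injS: "inj_on (\<lambda>l. card (S l)) {..<n}"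
      proof (rule inj_onI, rule ccontr)
        fix l l' assume ll: "l \<in> {..<n}" "l' \<in> {..<n}" "card (S l) = card (S l')" "l \<noteq> l'"
        show False
        proof (cases "t l \<le> t l'")
          case True
          hence "S l = S l'" using Snest[of l l'] ll finS by (intro card_subset_eq) auto
          thus False using nS ll by auto
        next
          case False
          hence "S l' = S l" using Snest[of l' l] ll finS by (intro card_subset_eq) auto
          thus False using nS ll by auto
        qed
      qed
      have imS: "(\<lambda>l. card (S l)) ` {..<n} = {1..n}"
        by (rule card_subset_eq) (use cardS in \<open>auto simp: card_image[OF injS]\<close>)
      have imR: "(\<lambda>l. card (R l)) ` {..<n} = {1..n}"
        by (rule card_subset_eq) (use cardS in \<open>auto simp: card_image[OF injR]\<close>)
      have "(\<Sum>l<n. card (S l)) = (\<Sum>x\<in>{1..n}. x)"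
        using sum.reindex[OF injS, of id] imS by simp
      also have "\<dots> = (\<Sum>l<n. card (R l))"
        using sum.reindex[OF injR, of id] imR by simp
      finally have eq: "(\<Sum>l<n. card (S l)) = (\<Sum>l<n. card (R l))" .
      have "(\<Sum>l<n. card (R l)) < (\<Sum>l<n. card (S l))"
      proof (rule sum_strict_mono_ex1)
        show "\<forall>x\<in>{..<n}. card (R x) \<le> card (S x)" using RS finS by (auto intro: card_mono)
        have "R i \<subset> S i"
        proof
          show "R i \<subseteq> S i" using RS ik by auto
          have "k \<in> S i" "k \<notin> R i" using ik unfolding S_def R_def by auto
          thus "R i \<noteq> S i" by auto
        qed
        hence "card (R i) < card (S i)" using finS by (auto intro: psubset_card_mono)
        thus "\<exists>a\<in>{..<n}. card (R a) < card (S a)" using ik by auto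
      qed simp
      with eq show False by simp
    qed
  qed
  then obtain l l' where ll: "l \<noteq> l'" "l < n" "l' < n" "S l = S l'" by blast
  have "det A = 0" by (rule det_identical_rows[OF Ac ll(1-3)]) (rule rowS[OF ll(2-4)])
  thus ?thesis unfolding A_def .
qed

lemma iter_inner_props:
  assumes cont: "continuous_on {0..1} \<phi>" and im: "\<phi> ` {0..1} \<subseteq> {0..1}"
  shows "continuous_on {0..1} (iter_inner \<phi> m) \<and> (\<forall>x\<in>{0..1}. 0 \<le> iter_inner \<phi> m x)"
proof (induction m)
  case 0
  then show ?case by simp
next
  case (Suc m)
  let ?g = "iter_inner \<phi> m"
  have int: "?g integrable_on {0..1}" using Suc integrable_continuous_interval by blast
  have "continuous_on {0..1} (\<lambda>x. integral {x..1} ?g)"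
    by (rule indefinite_integral_continuous_1'[OF int])
  hence c: "continuous_on {0..1} (\<lambda>s. integral {\<phi> s..1} ?g)"
    by (rule continuous_on_compose2[OF _ cont im])
  have "0 \<le> integral {\<phi> s..1} ?g" if "s \<in> {0..1}" for s
  proof (rule integral_nonneg)
    have "\<phi> s \<in> {0..1}" by (rule subsetD[OF im imageI[OF that]])
    hence "{\<phi> s..1} \<subseteq> {0..1}" by auto
    thus "?g integrable_on {\<phi> s..1}" using int integrable_on_subinterval by blast
    show "\<And>x. x \<in> {\<phi> s..1} \<Longrightarrow> 0 \<le> ?g x" using Suc \<open>{\<phi> s..1} \<subseteq> {0..1}\<close> by auto
  qed
  thus ?case using c by simp
qed

definition Gf :: "(real \<Rightarrow> real) \<Rightarrow> nat \<Rightarrow> real \<Rightarrow> real" where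
  "Gf \<phi> m b = (case m of 0 \<Rightarrow> 1 | Suc m' \<Rightarrow> integral {max 0 b..1} (iter_inner \<phi> m'))"

lemma Gf_phi:
  assumes "\<phi> ` {0..1} \<subseteq> {0..1}" "x \<in> {0..1}"
  shows "Gf \<phi> m (\<phi> x) = iter_inner \<phi> m x"
proof (cases m)
  case (Suc m')
  have "\<phi> x \<in> {0..1}" by (rule subsetD[OF assms(1) imageI[OF assms(2)]])
  hence "max 0 (\<phi> x) = \<phi> x" by auto
  thus ?thesis using Suc unfolding Gf_def by simp
qed (simp add: Gf_def)

lemma phi_meas:
  assumes cont: "continuous_on {0..1} \<phi>"
  shows "\<phi> \<in> borel_measurable (restrict_space lborel {0..1::real})"
proof -
  have "\<phi> \<in> borel_measurable (restrict_space borel {0..1::real})"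
    by (rule borel_measurable_continuous_on_restrict[OF cont])
  moreover have "measurable (restrict_space borel {0..1::real}) (borel::real measure) = measurable (restrict_space lborel {0..1::real}) borel"
    by (rule measurable_cong_sets[OF _ refl]) (rule sets_restrict_space_cong, simp)
  ultimately show ?thesis by simp
qed

lemma id_meas: "(\<lambda>x. x) \<in> borel_measurable (restrict_space lborel {0..1::real})"
  by (rule measurable_restrict_space1) (rule measurable_ident_sets, simp)

lemma comp_meas:
  assumes "i \<in> J" shows "(\<lambda>t. t i) \<in> borel_measurable (PiM J (\<lambda>_. restrict_space lborel {0..1::real}))"
  using measurable_compose[OF measurable_component_singleton[OF assms] id_meas] by simp

lemma phicomp_meas:
  assumes "continuous_on {0..1} \<phi>" "i \<in> J"
  shows "(\<lambda>t. \<phi> (t i)) \<in> borel_measurable (PiM J (\<lambda>_. restrict_space lborel {0..1::real}))"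
  using measurable_compose[OF measurable_component_singleton[OF assms(2)] phi_meas[OF assms(1)]] by simp

lemma pred_chain:
  assumes cont: "continuous_on {0..1} \<phi>" and fin: "finite J" and "K \<subseteq> J"
  shows "Measurable.pred (PiM J (\<lambda>_. restrict_space lborel {0..1::real})) (chainp \<phi> K)"
proof -
  let ?M = "PiM J (\<lambda>_. restrict_space lborel {0..1::real})"
  have finK: "finite K" using assms finite_subset by auto
  note c1 = comp_meas[of _ J] and c2 = phicomp_meas[OF cont, of _ J]
  have lt: "Measurable.pred ?M (\<lambda>t. f t < g t)" if "f \<in> borel_measurable ?M" "g \<in> borel_measurable ?M" for f g :: "_ \<Rightarrow> real"
    by (rule borel_measurable_pred_less[OF that])
  have p0: "Measurable.pred ?M (\<lambda>t. (t i < t k \<or> t k < t i) \<and> (t i < t k \<longrightarrow> \<phi> (t i) < t k))"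
    if "i \<in> J" "k \<in> J" for i k
    by (intro pred_intros_logic lt c1 c2 that)
  have p: "Measurable.pred ?M (\<lambda>t. i \<noteq> k \<longrightarrow> t i \<noteq> t k \<and> (t i < t k \<longrightarrow> \<phi> (t i) < t k))"
    if "i \<in> J" "k \<in> J" for i k
  proof (cases "i = k")
    case True
    then show ?thesis by (simp add: pred_def)
  next
    case False
    have "(\<lambda>t. i \<noteq> k \<longrightarrow> t i \<noteq> t k \<and> (t i < t k \<longrightarrow> \<phi> (t i) < t k))
       = (\<lambda>t. (t i < t k \<or> t k < t i) \<and> (t i < t k \<longrightarrow> \<phi> (t i) < t k))"
      using False by (auto simp: fun_eq_iff)
    then show ?thesis using p0[OF that] by simp
  qed
  show "Measurable.pred ?M (chainp \<phi> K)"
    unfolding chainp_def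
     apply (rule pred_intros_finite(3)[OF finK])
     apply (rule pred_intros_finite(3)[OF finK])
    using p \<open>K \<subseteq> J\<close> apply blast
    done
qed

lemma pred_lt:
  "f \<in> borel_measurable M \<Longrightarrow> g \<in> borel_measurable M \<Longrightarrow> Measurable.pred M (\<lambda>t. (f t::real) < g t)"
  by (rule borel_measurable_pred_less)

lemma nn_hk:
  fixes g :: "real \<Rightarrow> real"
  assumes c: "continuous_on {0..1} g" and nn: "\<forall>x\<in>{0..1}. 0 \<le> g x" and c0: "0 \<le> c"
  shows "(\<integral>\<^sup>+ y. ennreal (c * g y) * indicator {b<..} y * indicator {0..1} y \<partial>lborel)
    = ennreal (c * integral {max 0 b..1} g)"
proof -
  let ?a = "max 0 b"
  have "(\<integral>\<^sup>+ y. ennreal (c * g y) * indicator {b<..} y * indicator {0..1} y \<partial>lborel)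
     = (\<integral>\<^sup>+ y. ennreal (c * g y) * indicator {?a..1} y \<partial>lborel)"
    apply (rule nn_integral_cong_AE)
    using AE_lborel_singleton[of ?a] by eventually_elim (auto simp: indicator_def)
  also have "\<dots> = ennreal (c * integral {?a..1} g)"
  proof (rule nn_integral_has_integral_lebesgue')
    show "\<And>x. x \<in> {?a..1} \<Longrightarrow> 0 \<le> c * g x" using nn c0 by auto
    have "continuous_on {?a..1} g" using c by (rule continuous_on_subset) auto
    hence "g integrable_on {?a..1}" by (rule integrable_continuous_interval)
    thus "((\<lambda>x. c * g x) has_integral c * integral {?a..1} g) {?a..1}"
      by (intro has_integral_mult_right integrable_integral)
  qed
  finally show ?thesis .
qed

lemma phi_ge:
  fixes \<phi> :: "real \<Rightarrow> real"
  assumes mono: "mono_on {0..1} \<phi>" and im: "\<phi> ` {0..1} \<subseteq> {0..1}"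
    and gt: "\<forall>x\<in>{0<..<1}. \<phi> x > x"
  shows "\<forall>x\<in>{0..1}. x \<le> \<phi> x"
proof
  fix x :: real assume x: "x \<in> {0..1}"
  have phx: "\<phi> x \<in> {0..1}" by (rule subsetD[OF im imageI[OF x]])
  show "x \<le> \<phi> x"
  proof (cases "x = 0")
    case True thus ?thesis using phx by auto
  next
    case x0: False
    show ?thesis
    proof (cases "x = 1")
      case False
      hence "x \<in> {0<..<1}" using x x0 by auto
      thus ?thesis using gt by (meson less_imp_le)
    next
      case x1: True
      show ?thesis
      proof (rule ccontr)
        assume "\<not> x \<le> \<phi> x"
        hence lt: "\<phi> 1 < 1" using x1 by simp
        define y where "y = (max (\<phi> 1) 0 + 1) / 2"
        have y: "y \<in> {0<..<1}" using lt unfolding y_def by auto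
        have "\<phi> y \<le> \<phi> 1" using y by (intro mono_onD[OF mono]) auto
        moreover have "y < \<phi> y" using gt y by auto
        moreover have "\<phi> 1 \<le> y" using lt unfolding y_def by auto
        ultimately show False by simp
      qed
    qed
  qed
qed

lemma sum_indicator_unique:
  assumes "finite J" and "\<forall>j1\<in>J. \<forall>j2\<in>J. P j1 \<and> P j2 \<longrightarrow> j1 = j2"
  shows "(\<Sum>j\<in>J. (if P j then 1 else 0 :: ennreal)) = (if \<exists>j\<in>J. P j then 1 else 0)"
proof (cases "\<exists>j\<in>J. P j")
  case True
  then obtain j0 where j0: "j0 \<in> J" "P j0" by auto
  have "(\<Sum>j\<in>J. (if P j then 1 else 0 :: ennreal)) = (if P j0 then 1 else 0) + (\<Sum>j\<in>J-{j0}. (if P j then 1 else 0 :: ennreal))"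
    by (rule sum.remove[OF assms(1) j0(1)])
  also have "(\<Sum>j\<in>J-{j0}. (if P j then 1 else 0 :: ennreal)) = 0"
    using assms(2) j0 by (intro sum.neutral) auto
  finally show ?thesis using True j0 by simp
qed simp

lemma decomp_pointwise:
  fixes \<phi> :: "real \<Rightarrow> real"
  assumes ge: "\<forall>x\<in>{0..1}. x \<le> \<phi> x" and fin: "finite J" and ne: "J \<noteq> {}"
    and t: "\<forall>i\<in>J. t i \<in> {0..1}"
  shows "(chainp \<phi> J t \<and> (\<forall>j\<in>J. b < t j)) \<longleftrightarrow>
      (\<exists>j\<in>J. b < t j \<and> (\<forall>i\<in>J-{j}. \<phi> (t j) < t i) \<and> chainp \<phi> (J-{j}) t)"
    and "\<forall>j1\<in>J. \<forall>j2\<in>J. (b < t j1 \<and> (\<forall>i\<in>J-{j1}. \<phi> (t j1) < t i) \<and> chainp \<phi> (J-{j1}) t)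
       \<and> (b < t j2 \<and> (\<forall>i\<in>J-{j2}. \<phi> (t j2) < t i) \<and> chainp \<phi> (J-{j2}) t) \<longrightarrow> j1 = j2"
proof -
  have ge': "t i \<le> \<phi> (t i)" if "i \<in> J" for i using ge t that by auto
  show "\<forall>j1\<in>J. \<forall>j2\<in>J. (b < t j1 \<and> (\<forall>i\<in>J-{j1}. \<phi> (t j1) < t i) \<and> chainp \<phi> (J-{j1}) t)
       \<and> (b < t j2 \<and> (\<forall>i\<in>J-{j2}. \<phi> (t j2) < t i) \<and> chainp \<phi> (J-{j2}) t) \<longrightarrow> j1 = j2"
  proof (intro ballI impI; rule ccontr)
    fix j1 j2 assume j: "j1 \<in> J" "j2 \<in> J" and
      h: "(b < t j1 \<and> (\<forall>i\<in>J-{j1}. \<phi> (t j1) < t i) \<and> chainp \<phi> (J-{j1}) t)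
       \<and> (b < t j2 \<and> (\<forall>i\<in>J-{j2}. \<phi> (t j2) < t i) \<and> chainp \<phi> (J-{j2}) t)" and ne: "j1 \<noteq> j2"
    have "\<phi> (t j1) < t j2" "\<phi> (t j2) < t j1" using h j ne by auto
    thus False using ge'[OF j(1)] ge'[OF j(2)] by simp
  qed
  show "(chainp \<phi> J t \<and> (\<forall>j\<in>J. b < t j)) \<longleftrightarrow>
      (\<exists>j\<in>J. b < t j \<and> (\<forall>i\<in>J-{j}. \<phi> (t j) < t i) \<and> chainp \<phi> (J-{j}) t)"
  proof
    assume h: "chainp \<phi> J t \<and> (\<forall>j\<in>J. b < t j)"
    have "Min (t ` J) \<in> t ` J" using fin ne by (intro Min_in) auto
    then obtain j where j: "j \<in> J" "t j = Min (t ` J)" by (metis imageE)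
    have jmin: "t j \<le> t i" if "i \<in> J" for i using j fin that by auto
    have "\<forall>i\<in>J-{j}. \<phi> (t j) < t i"
    proof
      fix i assume i: "i \<in> J - {j}"
      hence "t j \<noteq> t i" using h j unfolding chainp_def by auto
      hence "t j < t i" using jmin i by force
      thus "\<phi> (t j) < t i" using h j i unfolding chainp_def by auto
    qed
    moreover have "chainp \<phi> (J-{j}) t" using h unfolding chainp_def by auto
    ultimately show "\<exists>j\<in>J. b < t j \<and> (\<forall>i\<in>J-{j}. \<phi> (t j) < t i) \<and> chainp \<phi> (J-{j}) t"
      using h j(1) by blast
  next
    assume "\<exists>j\<in>J. b < t j \<and> (\<forall>i\<in>J-{j}. \<phi> (t j) < t i) \<and> chainp \<phi> (J-{j}) t"
    then obtain j where j: "j \<in> J" "b < t j" "\<forall>i\<in>J-{j}. \<phi> (t j) < t i" "chainp \<phi> (J-{j}) t" by auto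
    have lt: "t j < t i" if "i \<in> J - {j}" for i using j(3) that ge'[OF j(1)] by force
    have "chainp \<phi> J t" unfolding chainp_def
    proof (intro ballI impI)
      fix i k assume ik: "i \<in> J" "k \<in> J" "i \<noteq> k"
      show "t i \<noteq> t k \<and> (t i < t k \<longrightarrow> \<phi> (t i) < t k)"
      proof (cases "i = j")
        case True thus ?thesis using ik lt j(3) by force
      next
        case False
        show ?thesis
        proof (cases "k = j")
          case True thus ?thesis using ik lt False by force
        next
          case False2: False
          thus ?thesis using False ik j(4) unfolding chainp_def by auto
        qed
      qed
    qed
    moreover have "\<forall>i\<in>J. b < t i"
    proof
      fix i assume "i \<in> J"
      thus "b < t i" using j lt by (cases "i = j") force+
    qed
    ultimately show "chainp \<phi> J t \<and> (\<forall>j\<in>J. b < t j)" by simp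
  qed
qed

lemma sf_U: "sigma_finite_measure (restrict_space lborel {0..1::real})"
  by (rule sigma_finite_measure_restrict_space[OF lborel.sigma_finite_measure_axioms]) simp

lemma main_rec:
  fixes \<phi> :: "real \<Rightarrow> real"
  assumes mono: "mono_on {0..1} \<phi>" and cont: "continuous_on {0..1} \<phi>"
    and im: "\<phi> ` {0..1} \<subseteq> {0..1}" and ge: "\<forall>x\<in>{0..1}. x \<le> \<phi> x"
  shows "finite J \<Longrightarrow> card J = m \<Longrightarrow>
    (\<integral>\<^sup>+ t. indicator {t. chainp \<phi> J t \<and> (\<forall>j\<in>J. b < t j)} t \<partial>PiM J (\<lambda>_. restrict_space lborel {0..1}))
     = ennreal (fact m * Gf \<phi> m b)"
proof (induction m arbitrary: J b)
  case 0
  hence J: "J = {}" by simp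
  show ?case by (simp add: J chainp_def PiM_empty Gf_def)
next
  case (Suc m)
  let ?U = "restrict_space lborel {0..1::real}"
  let ?M = "\<lambda>K. PiM K (\<lambda>_. ?U)"
  interpret product_sigma_finite "\<lambda>_. ?U" by (simp add: product_sigma_finite_def sf_U)
  have fin: "finite J" and ne: "J \<noteq> {}" using Suc.prems by auto
  define R where "R j t = (b < t j \<and> (\<forall>i\<in>J-{j}. \<phi> (t j) < t i) \<and> chainp \<phi> (J-{j}) t)" for j t
  have spaceM: "t i \<in> {0..1}" if "t \<in> space (?M K)" "i \<in> K" for t i K
    using that by (auto simp: space_PiM PiE_def Pi_def)
  have decomp: "indicator {t. chainp \<phi> J t \<and> (\<forall>j\<in>J. b < t j)} t = (\<Sum>j\<in>J. indicator {t. R j t} t :: ennreal)"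
    if "t \<in> space (?M J)" for t
  proof -
    have t: "\<forall>i\<in>J. t i \<in> {0..1}" using spaceM[OF that] by blast
    note d = decomp_pointwise[OF ge fin ne t, of b]
    have "(\<Sum>j\<in>J. indicator {t. R j t} t :: ennreal) = (\<Sum>j\<in>J. (if R j t then 1 else 0))"
      by (intro sum.cong) (auto simp: indicator_def)
    also have "\<dots> = (if \<exists>j\<in>J. R j t then 1 else 0)"
      by (rule sum_indicator_unique[OF fin]) (use d(2) in \<open>simp add: R_def\<close>)
    finally show ?thesis using d(1) unfolding R_def by (auto simp: indicator_def)
  qed
  have measR: "(\<lambda>t. indicator {t. R j t} t :: ennreal) \<in> borel_measurable (?M J)" if j: "j \<in> J" for j
  proof -
    have "Measurable.pred (?M J) (\<lambda>t. R j t)" unfolding R_def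
      apply (intro pred_intros_logic(3))
        apply (rule pred_lt[OF measurable_const comp_meas[OF j]], simp)
       apply (rule pred_intros_finite(3))
      using fin apply simp
       apply (rule pred_lt[OF phicomp_meas[OF cont j] comp_meas], simp)
      apply (rule pred_chain[OF cont fin], auto)
      done
    thus ?thesis by (simp add: pred_def borel_measurable_indicator_iff)
  qed
  define V where "V = fact m * integral {max 0 b..1} (iter_inner \<phi> m)"
  have one: "(\<integral>\<^sup>+ t. indicator {t. R j t} t \<partial>?M J) = ennreal V" if j: "j \<in> J" for j
  proof -
    have Jj: "J = insert j (J - {j})" using j by auto
    have finJ': "finite (J - {j})" "j \<notin> J - {j}" using fin by auto
    have cardJ': "card (J - {j}) = m" using Suc.prems j by simp
    have "(\<integral>\<^sup>+ t. indicator {t. R j t} t \<partial>?M J)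
        = (\<integral>\<^sup>+ y. (\<integral>\<^sup>+ x. indicator {t. R j t} (x(j := y)) \<partial>?M (J - {j})) \<partial>?U)"
      using product_nn_integral_insert_rev[OF finJ', of "\<lambda>t. indicator {t. R j t} t"] measR[OF j] Jj
      by simp
    also have "\<dots> = (\<integral>\<^sup>+ y. indicator {b<..} y * (\<integral>\<^sup>+ x. indicator {t. chainp \<phi> (J-{j}) t \<and> (\<forall>i\<in>J-{j}. \<phi> y < t i)} x \<partial>?M (J - {j})) \<partial>?U)"
    proof (rule nn_integral_cong)
      fix y assume y: "y \<in> space ?U"
      have "(\<integral>\<^sup>+ x. indicator {t. R j t} (x(j := y)) \<partial>?M (J - {j}))
         = (\<integral>\<^sup>+ x. indicator {b<..} y * indicator {t. chainp \<phi> (J-{j}) t \<and> (\<forall>i\<in>J-{j}. \<phi> y < t i)} x \<partial>?M (J - {j}))"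
      proof (rule nn_integral_cong)
        fix x assume x: "x \<in> space (?M (J - {j}))"
        have "chainp \<phi> (J-{j}) (x(j := y)) = chainp \<phi> (J-{j}) x" unfolding chainp_def by auto
        moreover have "(\<forall>i\<in>J-{j}. \<phi> ((x(j := y)) j) < (x(j := y)) i) = (\<forall>i\<in>J-{j}. \<phi> y < x i)" by auto
        ultimately show "indicator {t. R j t} (x(j := y)) = (indicator :: _ \<Rightarrow> _ \<Rightarrow> ennreal) {b<..} y * indicator {t. chainp \<phi> (J-{j}) t \<and> (\<forall>i\<in>J-{j}. \<phi> y < t i)} x"
          unfolding R_def by (auto simp: indicator_def)
      qed
      also have "\<dots> = indicator {b<..} y * (\<integral>\<^sup>+ x. indicator {t. chainp \<phi> (J-{j}) t \<and> (\<forall>i\<in>J-{j}. \<phi> y < t i)} x \<partial>?M (J - {j}))"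
      proof (rule nn_integral_cmult)
        let ?P = "\<lambda>t. chainp \<phi> (J-{j}) t \<and> (\<forall>i\<in>J-{j}. \<phi> y < t i)"
        have "Measurable.pred (?M (J-{j})) ?P"
          apply (intro pred_intros_logic(3))
           apply (rule pred_chain[OF cont finJ'(1)], simp)
          apply (rule pred_intros_finite(3)[OF finJ'(1)])
          apply (rule pred_lt[OF measurable_const comp_meas], simp_all)
          done
        hence "{t \<in> space (?M (J-{j})). ?P t} \<in> sets (?M (J-{j}))" by (simp add: pred_def)
        moreover have "{t. ?P t} \<inter> space (?M (J-{j})) = {t \<in> space (?M (J-{j})). ?P t}" by blast
        ultimately show "indicator {t. ?P t} \<in> borel_measurable (?M (J-{j}))"
          by (simp add: borel_measurable_indicator_iff)
      qed
      finally show "(\<integral>\<^sup>+ x. indicator {t. R j t} (x(j := y)) \<partial>?M (J - {j})) = indicator {b<..} y * (\<integral>\<^sup>+ x. indicator {t. chainp \<phi> (J-{j}) t \<and> (\<forall>i\<in>J-{j}. \<phi> y < t i)} x \<partial>?M (J - {j}))" .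
    qed
    also have "\<dots> = (\<integral>\<^sup>+ y. ennreal (fact m * iter_inner \<phi> m y) * indicator {b<..} y \<partial>?U)"
    proof (rule nn_integral_cong)
      fix y assume y: "y \<in> space ?U"
      hence y01: "y \<in> {0..1}" by simp
      show "indicator {b<..} y * (\<integral>\<^sup>+ x. indicator {t. chainp \<phi> (J-{j}) t \<and> (\<forall>i\<in>J-{j}. \<phi> y < t i)} x \<partial>?M (J - {j}))
          = ennreal (fact m * iter_inner \<phi> m y) * indicator {b<..} y"
        using Suc.IH[OF finJ'(1) cardJ', of "\<phi> y"] Gf_phi[OF im y01, of m] by (simp add: mult.commute)
    qed
    also have "\<dots> = (\<integral>\<^sup>+ y. ennreal (fact m * iter_inner \<phi> m y) * indicator {b<..} y * indicator {0..1} y \<partial>lborel)"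
      by (rule nn_integral_restrict_space) simp
    also have "\<dots> = ennreal V" unfolding V_def
      using iter_inner_props[OF cont im, of m] by (intro nn_hk) auto
    finally show ?thesis .
  qed
  have "(\<integral>\<^sup>+ t. indicator {t. chainp \<phi> J t \<and> (\<forall>j\<in>J. b < t j)} t \<partial>?M J)
      = (\<integral>\<^sup>+ t. (\<Sum>j\<in>J. indicator {t. R j t} t) \<partial>?M J)"
    by (rule nn_integral_cong) (rule decomp)
  also have "\<dots> = (\<Sum>j\<in>J. (\<integral>\<^sup>+ t. indicator {t. R j t} t \<partial>?M J))"
    by (rule nn_integral_sum) (rule measR)
  also have "\<dots> = (\<Sum>j\<in>J. ennreal V)" using one by simp
  also have "\<dots> = ennreal (of_nat (Suc m) * V)" using Suc.prems by (simp add: ennreal_of_nat_eq_real_of_nat ennreal_mult')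
  also have "of_nat (Suc m) * V = fact (Suc m) * Gf \<phi> (Suc m) b" unfolding V_def Gf_def by simp
  finally show ?case .
qed

lemma Gf_nonneg:
  assumes cont: "continuous_on {0..1} \<phi>" and im: "\<phi> ` {0..1} \<subseteq> {0..1}"
  shows "0 \<le> Gf \<phi> n (-1)"
proof (cases n)
  case (Suc m)
  have p: "continuous_on {0..1} (iter_inner \<phi> m)" "\<forall>x\<in>{0..1}. 0 \<le> iter_inner \<phi> m x"
    using iter_inner_props[OF cont im, of m] by auto
  have "0 \<le> integral {0..1} (iter_inner \<phi> m)"
    by (rule integral_nonneg[OF integrable_continuous_interval[OF p(1)]]) (use p(2) in auto)
  thus ?thesis using Suc by (simp add: Gf_def)
qed (simp add: Gf_def)

lemma fredA:
  fixes \<phi> :: "real \<Rightarrow> real"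
  assumes mono: "mono_on {0..1} \<phi>" and cont: "continuous_on {0..1} \<phi>"
    and im: "\<phi> ` {0..1} \<subseteq> {0..1}" and ge: "\<forall>x\<in>{0..1}. x \<le> \<phi> x"
  shows "fred_A (Vphi_kernel \<phi>) n = fact n * Gf \<phi> n (-1) \<and> fact n * Gf \<phi> n (-1) \<le> 1"
proof -
  let ?U = "restrict_space lborel {0..1::real}"
  let ?M = "PiM {..<n} (\<lambda>_. ?U)"
  let ?A = "{t. chainp \<phi> {..<n} t}"
  let ?B = "{t. chainp \<phi> {..<n} t \<and> (\<forall>j\<in>{..<n}. -1 < t j)}"
  have spaceM: "\<forall>i<n. t i \<in> {0..1}" if "t \<in> space ?M" for t
    using that by (auto simp: space_PiM PiE_def Pi_def)
  have measA: "(\<lambda>t. indicator ?A t :: real) \<in> borel_measurable ?M"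
  proof -
    have "{t \<in> space ?M. chainp \<phi> {..<n} t} \<in> sets ?M"
      using pred_chain[OF cont, of "{..<n}" "{..<n}"] by (simp add: pred_def)
    moreover have "?A \<inter> space ?M = {t \<in> space ?M. chainp \<phi> {..<n} t}" by blast
    ultimately show ?thesis by (simp add: borel_measurable_indicator_iff)
  qed
  have "fred_A (Vphi_kernel \<phi>) n = (\<integral>t. indicator ?A t \<partial>?M)"
    unfolding fred_A_def
  proof (rule Bochner_Integration.integral_cong[OF refl])
    fix t assume "t \<in> space ?M"
    hence t: "\<forall>i<n. t i \<in> {0..1}" by (rule spaceM)
    show "det (mat n n (\<lambda>(i, j). Vphi_kernel \<phi> (t i) (t j))) = indicator ?A t"
      using det_chain1[OF ge t] det_chain0[OF mono ge t] by (auto simp: indicator_def)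
  qed
  also have "\<dots> = enn2real (\<integral>\<^sup>+ t. ennreal (indicator ?A t) \<partial>?M)"
    by (rule integral_eq_nn_integral[OF measA]) auto
  also have "(\<integral>\<^sup>+ t. ennreal (indicator ?A t) \<partial>?M) = (\<integral>\<^sup>+ t. indicator ?B t \<partial>?M)"
  proof (rule nn_integral_cong)
    fix t assume "t \<in> space ?M"
    hence t: "\<forall>i<n. t i \<in> {0..1}" by (rule spaceM)
    hence "t \<in> ?A \<longleftrightarrow> t \<in> ?B" by force
    thus "ennreal (indicator ?A t) = indicator ?B t" by (simp add: indicator_def)
  qed
  also have eq: "\<dots> = ennreal (fact n * Gf \<phi> n (-1))"
    by (rule main_rec[OF mono cont im ge]) auto
  finally have "fred_A (Vphi_kernel \<phi>) n = fact n * Gf \<phi> n (-1)"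
    using Gf_nonneg[OF cont im, of n] by simp
  moreover have "fact n * Gf \<phi> n (-1) \<le> 1"
  proof -
    have ps: "prob_space ?M"
      by (rule prob_space_PiM, rule prob_space_restrict_space) auto
    have "ennreal (fact n * Gf \<phi> n (-1)) = (\<integral>\<^sup>+ t. indicator ?B t \<partial>?M)" using eq by simp
    also have "\<dots> \<le> (\<integral>\<^sup>+ t. 1 \<partial>?M)" by (rule nn_integral_mono) (simp add: indicator_def)
    also have "\<dots> = 1" using prob_space.emeasure_space_1[OF ps] by simp
    finally show ?thesis by (simp add: ennreal_le_1)
  qed
  ultimately show ?thesis by simp
qed

theorem theorem3p2:
  fixes \<phi> :: "real \<Rightarrow> real" and z :: complex
  assumes "mono_on {0..1} \<phi>"
    and "continuous_on {0..1} \<phi>"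
    and "\<phi> ` {0..1} \<subseteq> {0..1}"
    and "\<forall>x\<in>{0<..<1}. \<phi> x > x"
  shows "summable (fred_term (Vphi_kernel \<phi>) z)
    \<and> summable (\<lambda>n. (-1)^(Suc n) * z^(Suc n) * of_real (iter_int \<phi> (Suc n)))
    \<and> fredholm_det (Vphi_kernel \<phi>) z
        = 1 + (\<Sum>n. (-1)^(Suc n) * z^(Suc n) * of_real (iter_int \<phi> (Suc n)))"
proof -
  note mono = assms(1) and cont = assms(2) and im = assms(3)
  have ge: "\<forall>x\<in>{0..1}. x \<le> \<phi> x" by (rule phi_ge[OF assms(1,3,4)])
  note fA = fredA[OF mono cont im ge]
  have ft: "fred_term (Vphi_kernel \<phi>) z n = (-1)^n * z^n * of_real (Gf \<phi> n (-1))" for n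
    using fA[of n] unfolding fred_term_def by (simp add: field_simps)
  have bound: "norm (fred_term (Vphi_kernel \<phi>) z n) \<le> inverse (fact n) * norm z ^ n" for n
  proof -
    have g0: "0 \<le> Gf \<phi> n (-1)" by (rule Gf_nonneg[OF cont im])
    have "Gf \<phi> n (-1) \<le> inverse (fact n)" using fA[of n] by (simp add: field_simps)
    hence "norm (fred_term (Vphi_kernel \<phi>) z n) = Gf \<phi> n (-1) * norm z ^ n"
      using g0 by (simp add: ft norm_mult norm_power)
    also have "\<dots> \<le> inverse (fact n) * norm z ^ n"
      using \<open>Gf \<phi> n (-1) \<le> inverse (fact n)\<close> by (intro mult_right_mono) auto
    finally show ?thesis .
  qed
  have s1: "summable (fred_term (Vphi_kernel \<phi>) z)"
    by (rule summable_comparison_test[OF _ summable_exp[of "norm z"]]) (use bound in auto)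
  have eqs: "(-1)^(Suc n) * z^(Suc n) * of_real (iter_int \<phi> (Suc n)) = fred_term (Vphi_kernel \<phi>) z (Suc n)" for n
    by (simp add: ft iter_int_def Gf_def)
  have s2: "summable (\<lambda>n. (-1)^(Suc n) * z^(Suc n) * of_real (iter_int \<phi> (Suc n)))"
    unfolding eqs using s1 by (simp add: summable_Suc_iff)
  have "fredholm_det (Vphi_kernel \<phi>) z = 1 + (\<Sum>n. fred_term (Vphi_kernel \<phi>) z (Suc n))"
    unfolding fredholm_det_def using suminf_split_head[OF s1] by (simp add: ft Gf_def)
  thus ?thesis using s1 s2 unfolding eqs by simp
qed

end
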